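(* Let $X$ and $Y$ be random variables on finite alphabets with joint distribution $p(x_i,y_j)$, marginals $p(x_i)$, $p(y_j)$, and conditional probabilities $p(x_i\mid y_j)$ (defined whenever $p(y_j)>0$). For every $0<\varpi\le 2$, $$\Phi_\varpi(X\|Y)=L(\varpi,X)-L(\varpi,X\mid Y)\ \ge 0 .$$
   Context: For a discrete random variable $X$ with distribution $\{p(x_1),\dots,p(x_n)\}$ the message importance measure (MIM) is $L(\varpi,X)=\sum_i p(x_i)e^{\varpi(1-p(x_i))}$. For a pair $(X,Y)$ the conditional message importance measure (CMIM) is $L(\varpi,X\mid Y)=\sum_{j:\,p(y_j)>0} p(y_j)\sum_i p(x_i\mid y_j)e^{\varpi(1-p(x_i\mid y_j))}$. The message importance loss is $\Phi_\varpi(X\|Y)=L(\varpi,X)-L(\varpi,X\mid Y)$. *)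

theory Defs
  imports Complex_Main
begin

definition marg_X :: "('a \<Rightarrow> 'b \<Rightarrow> real) \<Rightarrow> 'b set \<Rightarrow> 'a \<Rightarrow> real" where
  "marg_X pXY B x = (\<Sum>y\<in>B. pXY x y)"

definition marg_Y :: "('a \<Rightarrow> 'b \<Rightarrow> real) \<Rightarrow> 'a set \<Rightarrow> 'b \<Rightarrow> real" where
  "marg_Y pXY A y = (\<Sum>x\<in>A. pXY x y)"

text \<open>conditional probability p(x|y), used only when p(y) > 0\<close>
definition cond_XY :: "('a \<Rightarrow> 'b \<Rightarrow> real) \<Rightarrow> 'a set \<Rightarrow> 'a \<Rightarrow> 'b \<Rightarrow> real" where
  "cond_XY pXY A x y = pXY x y / marg_Y pXY A y"

definition MIM :: "real \<Rightarrow> ('a \<Rightarrow> real) \<Rightarrow> 'a set \<Rightarrow> real" where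
  "MIM w P A = (\<Sum>x\<in>A. P x * exp (w * (1 - P x)))"

definition CMIM :: "real \<Rightarrow> ('a \<Rightarrow> 'b \<Rightarrow> real) \<Rightarrow> 'a set \<Rightarrow> 'b set \<Rightarrow> real" where
  "CMIM w pXY A B =
     (\<Sum>y\<in>{y\<in>B. marg_Y pXY A y > 0}.
        marg_Y pXY A y * (\<Sum>x\<in>A. cond_XY pXY A x y * exp (w * (1 - cond_XY pXY A x y))))"

definition MIL :: "real \<Rightarrow> ('a \<Rightarrow> 'b \<Rightarrow> real) \<Rightarrow> 'a set \<Rightarrow> 'b set \<Rightarrow> real" where
  "MIL w pXY A B = MIM w (marg_X pXY B) A - CMIM w pXY A B"

end

theory Submission
  imports Defs "HOL-Analysis.Analysis"
begin

lemma g_concave: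
  assumes "0 < w" "w \<le> 2"
  shows "concave_on {0..1} (\<lambda>p::real. p * exp (w * (1 - p)))"
  unfolding concave_on_def
proof (rule f''_ge0_imp_convex[where f' = "\<lambda>p. exp (w * (1 - p)) * (w * p - 1)"
      and f'' = "\<lambda>p. w * exp (w * (1 - p)) * (2 - w * p)"])
  show "convex {0..1::real}" by simp
  fix x :: real assume x: "x \<in> {0..1}"
  show "((\<lambda>p. - (p * exp (w * (1 - p)))) has_real_derivative exp (w * (1 - x)) * (w * x - 1)) (at x)"
    by (rule derivative_eq_intros refl | simp add: algebra_simps)+
  show "((\<lambda>p. exp (w * (1 - p)) * (w * p - 1)) has_real_derivative w * exp (w * (1 - x)) * (2 - w * x)) (at x)"
    by (rule derivative_eq_intros refl | simp add: algebra_simps)+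
  have "w * x \<le> 2" using x assms by (smt (verit) atLeastAtMost_iff mult_left_le)
  then show "0 \<le> w * exp (w * (1 - x)) * (2 - w * x)" using assms by simp
qed

theorem mainTheorem1:
  fixes pXY :: "'a \<Rightarrow> 'b \<Rightarrow> real" and A :: "'a set" and B :: "'b set" and w :: real
  assumes "finite A" and "finite B"
    and "\<And>x y. x \<in> A \<Longrightarrow> y \<in> B \<Longrightarrow> pXY x y \<ge> 0"
    and "(\<Sum>x\<in>A. \<Sum>y\<in>B. pXY x y) = 1"
    and "0 < w" and "w \<le> 2"
  shows "MIL w pXY A B \<ge> 0"
proof -
  define g where "g = (\<lambda>p::real. p * exp (w * (1 - p)))"
  define pY where "pY = marg_Y pXY A"
  define S where "S = {y\<in>B. pY y > 0}"
  define c where "c = cond_XY pXY A"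
  have fS: "finite S" using assms(2) by (simp add: S_def)
  have SB: "S \<subseteq> B" by (auto simp: S_def)
  have pY_nn: "pY y \<ge> 0" if "y \<in> B" for y
    unfolding pY_def marg_Y_def using assms(3) that by (simp add: sum_nonneg)
  have sumB: "(\<Sum>y\<in>B. pY y) = 1"
    unfolding pY_def marg_Y_def using assms(4) sum.swap by metis
  have sumS: "(\<Sum>y\<in>S. pY y) = 1"
  proof -
    have "(\<Sum>y\<in>S. pY y) = (\<Sum>y\<in>B. pY y)"
    proof (rule sum.mono_neutral_left[OF assms(2) SB])
      show "\<forall>i\<in>B - S. pY i = 0"
      proof
        fix y assume y: "y \<in> B - S"
        then have "\<not> pY y > 0" by (simp add: S_def)
        moreover have "pY y \<ge> 0" using y pY_nn by blast
        ultimately show "pY y = 0" by linarith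
      qed
    qed
    then show ?thesis using sumB by simp
  qed
  have Sne: "S \<noteq> {}" using sumS by auto
  have zero: "pXY x y = 0" if "x \<in> A" "y \<in> B" "y \<notin> S" for x y
  proof -
    have "pY y = 0" using that pY_nn[of y] by (auto simp: S_def)
    then have "(\<Sum>x\<in>A. pXY x y) = 0" by (simp add: pY_def marg_Y_def)
    then have "\<forall>x\<in>A. pXY x y = 0"
      by (subst (asm) sum_nonneg_eq_0_iff[OF assms(1)]) (use assms(3) that in auto)
    then show ?thesis using that by blast
  qed
  have le: "pXY x y \<le> pY y" if "x \<in> A" "y \<in> B" for x y
    unfolding pY_def marg_Y_def
    using member_le_sum[of x A "\<lambda>x. pXY x y"] assms(1,3) that by auto
  have cC: "c x y \<in> {0..1}" if "x \<in> A" "y \<in> S" for x y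
    using that le[of x y] assms(3)[of x y] SB
    by (auto simp: c_def cond_XY_def pY_def[symmetric] S_def divide_le_eq_1)
  have margX: "marg_X pXY B x = (\<Sum>y\<in>S. pY y *\<^sub>R c x y)" if "x \<in> A" for x
  proof -
    have "marg_X pXY B x = (\<Sum>y\<in>S. pXY x y)"
      unfolding marg_X_def
      by (rule sum.mono_neutral_right[OF assms(2) SB]) (use zero that in auto)
    also have "\<dots> = (\<Sum>y\<in>S. pY y *\<^sub>R c x y)"
      by (rule sum.cong) (auto simp: S_def c_def cond_XY_def pY_def)
    finally show ?thesis .
  qed
  have jen: "g (marg_X pXY B x) \<ge> (\<Sum>y\<in>S. pY y * g (c x y))" if "x \<in> A" for x
    unfolding margX[OF that] g_def
    by (rule concave_on_sum[OF fS Sne g_concave[OF assms(5,6)] sumS])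
       (use pY_nn SB cC that in auto)
  have "CMIM w pXY A B = (\<Sum>y\<in>S. pY y * (\<Sum>x\<in>A. g (c x y)))"
    by (simp add: CMIM_def S_def pY_def c_def g_def)
  also have "\<dots> = (\<Sum>x\<in>A. \<Sum>y\<in>S. pY y * g (c x y))"
    unfolding sum_distrib_left by (rule sum.swap)
  also have "\<dots> \<le> (\<Sum>x\<in>A. g (marg_X pXY B x))"
    by (rule sum_mono) (rule jen)
  also have "\<dots> = MIM w (marg_X pXY B) A" by (simp add: MIM_def g_def)
  finally show ?thesis by (simp add: MIL_def)
qed

end
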